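(* For every $n\geq 3$ and every prime power $q=p^h$, the minimum distance $d(C(PG(n,q))^\perp)$ equals $d(C(PG(2,q))^\perp)$.
   Context: $C(PG(m,q))$ is the $p$-ary code spanned over $\mathbb{F}_p$ by the incidence vectors of the hyperplanes of $PG(m,q)$, with coordinates indexed by points. For $m=2$ the hyperplanes are the lines. $C^\perp$ is the dual code with respect to the standard scalar product over $\mathbb{F}_p$. $d(\cdot)$ denotes minimum distance, i.e. minimum nonzero weight. *)

theory Defs
  imports Main
begin

text \<open>Vectors of GF(q)^(m+1), represented as functions nat => 'a vanishing outside {0..m}.\<close>
definition vecs :: "nat \<Rightarrow> (nat \<Rightarrow> 'a::field) set" where
  "vecs m = {v. \<forall>i>m. v i = 0}"

definition line_of :: "(nat \<Rightarrow> 'a::field) \<Rightarrow> (nat \<Rightarrow> 'a) set" where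
  "line_of v = {(\<lambda>i. c * v i) | c. True}"

definition pg_points :: "nat \<Rightarrow> (nat \<Rightarrow> 'a::field) set set" where
  "pg_points m = {line_of v | v. v \<in> vecs m \<and> v \<noteq> (\<lambda>_. 0)}"

definition pg_hyperplane :: "nat \<Rightarrow> (nat \<Rightarrow> 'a::field) \<Rightarrow> (nat \<Rightarrow> 'a) set set" where
  "pg_hyperplane m a = {P \<in> pg_points m. \<forall>v\<in>P. (\<Sum>i\<le>m. a i * v i) = 0}"

definition pg_hyperplanes :: "nat \<Rightarrow> (nat \<Rightarrow> 'a::field) set set set" where
  "pg_hyperplanes m = {pg_hyperplane m a | a. a \<in> vecs m \<and> a \<noteq> (\<lambda>_. 0)}"

text \<open>Incidence vector of a set of points, with entries in the field 'b (playing F_p).\<close>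
definition incidence_vec :: "'p set \<Rightarrow> 'p \<Rightarrow> 'b::field" where
  "incidence_vec S = (\<lambda>x. if x \<in> S then 1 else 0)"

text \<open>C(PG(m,q)): the 'b-span of the incidence vectors of the hyperplanes
  (finite linear combinations; the set of hyperplanes is finite for finite 'a).\<close>
definition pg_code :: "nat \<Rightarrow> ((nat \<Rightarrow> 'a::{finite,field}) set \<Rightarrow> 'b::field) set" where
  "pg_code m = {(\<lambda>x. \<Sum>H\<in>pg_hyperplanes m. coef H * incidence_vec H x) | coef. True}"

definition pg_dual_code :: "nat \<Rightarrow> ((nat \<Rightarrow> 'a::{finite,field}) set \<Rightarrow> 'b::field) set" where
  "pg_dual_code m = {c. (\<forall>x. x \<notin> pg_points m \<longrightarrow> c x = 0) \<and>
      (\<forall>w\<in>(pg_code m :: ((nat \<Rightarrow> 'a) set \<Rightarrow> 'b) set). (\<Sum>x\<in>pg_points m. w x * c x) = 0)}"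

definition weight :: "'p set \<Rightarrow> ('p \<Rightarrow> 'b::zero) \<Rightarrow> nat" where
  "weight P c = card {x \<in> P. c x \<noteq> 0}"

definition dual_min_dist :: "'a::{finite,field} itself \<Rightarrow> 'b::field itself \<Rightarrow> nat \<Rightarrow> nat" where
  "dual_min_dist TA TB m =
     Min {weight (pg_points m) c | c. c \<in> (pg_dual_code m :: ((nat \<Rightarrow> 'a) set \<Rightarrow> 'b) set) \<and>
                                        c \<noteq> (\<lambda>_. 0)}"

end

theory Submission
  imports Defs "HOL-Number_Theory.Residues"
begin

lemma char_zero_b:
  assumes "card (UNIV :: 'b::{finite,field} set) = semiring_char TYPE('a::{finite,field})"
  shows "(of_nat (card (UNIV::'a set)) :: 'b) = 0"
proof -
  have "CHAR('b) dvd card (UNIV::'b set)" by (rule CHAR_dvd_CARD)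
  also have "\<dots> = CHAR('a)" using assms by simp
  also have "\<dots> dvd card (UNIV::'a set)" by (rule CHAR_dvd_CARD)
  finally show ?thesis by (simp add: of_nat_eq_0_iff_char_dvd)
qed

lemma finite_vecs: "finite (vecs m :: (nat \<Rightarrow> 'a::{finite,field}) set)"
proof -
  have "vecs m = {f::nat\<Rightarrow>'a. \<forall>x. (x \<in> {..m} \<longrightarrow> f x \<in> UNIV) \<and> (x \<notin> {..m} \<longrightarrow> f x = 0)}"
    by (auto simp: vecs_def)
  thus ?thesis using finite_set_of_finite_funs[of "{..m}" "UNIV::'a set" 0] by simp
qed

lemma finite_pts: "finite (pg_points m :: (nat \<Rightarrow> 'a::{finite,field}) set set)"
proof -
  have "pg_points m \<subseteq> line_of ` (vecs m :: (nat \<Rightarrow> 'a) set)"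
    by (auto simp: pg_points_def)
  thus ?thesis using finite_vecs finite_subset by blast
qed

lemma finite_hyps: "finite (pg_hyperplanes m :: (nat \<Rightarrow> 'a::{finite,field}) set set set)"
proof -
  have "pg_hyperplanes m \<subseteq> pg_hyperplane m ` (vecs m :: (nat \<Rightarrow> 'a) set)"
    by (auto simp: pg_hyperplanes_def)
  thus ?thesis using finite_vecs finite_subset by blast
qed

lemma sum_restrict_sub: "finite A \<Longrightarrow> B \<subseteq> A \<Longrightarrow> (\<Sum>x\<in>A. if x \<in> B then g x else 0) = sum g B"
  by (simp add: sum.inter_restrict[symmetric] Int_absorb1)

lemma hyp_sub: "pg_hyperplane m a \<subseteq> pg_points m"
  by (auto simp: pg_hyperplane_def)

lemma in_line_of: "w \<in> line_of v \<longleftrightarrow> (\<exists>c. w = (\<lambda>i. c * v i))"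
  by (auto simp: line_of_def)

lemma self_in_line_of: "v \<in> line_of v"
  unfolding in_line_of by (rule exI[of _ 1]) simp

lemma line_of_smult: "(c::'a::field) \<noteq> 0 \<Longrightarrow> line_of (\<lambda>i. c * v i) = line_of v"
proof -
  assume c: "c \<noteq> 0"
  show ?thesis
  proof (auto simp: in_line_of)
    fix d show "\<exists>e. (\<lambda>i. d * (c * v i)) = (\<lambda>i. e * v i)" by (rule exI[of _ "d*c"]) (simp add: mult.assoc)
  next
    fix d show "\<exists>e. (\<lambda>i. d * v i) = (\<lambda>i. e * (c * v i))"
      by (rule exI[of _ "d/c"]) (use c in \<open>simp add: fun_eq_iff\<close>)
  qed
qed

lemma line_of_eq: "line_of v = line_of w \<Longrightarrow> \<exists>c. v = (\<lambda>i. c * w i)"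
  using self_in_line_of[of v] by (simp add: in_line_of)

lemma pts_iff: "P \<in> pg_points m \<longleftrightarrow> (\<exists>v. v \<in> vecs m \<and> v \<noteq> (\<lambda>_. 0) \<and> P = line_of v)"
  by (auto simp: pg_points_def)

lemma vecs_smult: "v \<in> vecs m \<Longrightarrow> (\<lambda>i. c * v i) \<in> vecs m"
  by (simp add: vecs_def)

lemma line_sub_vecs: "v \<in> vecs m \<Longrightarrow> line_of v \<subseteq> vecs m"
  by (auto simp: in_line_of vecs_smult)

lemma line_in_hyp:
  "line_of u \<in> pg_hyperplane m a \<longleftrightarrow> line_of u \<in> pg_points m \<and> (\<Sum>i\<le>m. a i * u i) = 0"
proof -
  have "(\<Sum>i\<le>m. a i * (c * u i)) = c * (\<Sum>i\<le>m. a i * u i)" for c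
    by (simp add: sum_distrib_left algebra_simps)
  thus ?thesis using self_in_line_of[of u]
    by (auto simp: pg_hyperplane_def in_line_of)
qed

lemma dual_iff:
  "(c \<in> (pg_dual_code m :: ((nat \<Rightarrow> 'a::{finite,field}) set \<Rightarrow> 'b::field) set)) \<longleftrightarrow>
   (\<forall>x. x \<notin> pg_points m \<longrightarrow> c x = 0) \<and>
   (\<forall>a. a \<in> vecs m \<and> a \<noteq> (\<lambda>_. 0) \<longrightarrow> (\<Sum>x\<in>pg_hyperplane m a. c x) = 0)"
proof
  assume c: "c \<in> pg_dual_code m"
  show "(\<forall>x. x \<notin> pg_points m \<longrightarrow> c x = 0) \<and>
   (\<forall>a. a \<in> vecs m \<and> a \<noteq> (\<lambda>_. 0) \<longrightarrow> (\<Sum>x\<in>pg_hyperplane m a. c x) = 0)"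
  proof (intro conjI allI impI)
    show "x \<notin> pg_points m \<Longrightarrow> c x = 0" for x using c by (simp add: pg_dual_code_def)
    fix a :: "nat \<Rightarrow> 'a" assume a: "a \<in> vecs m \<and> a \<noteq> (\<lambda>_. 0)"
    let ?H = "pg_hyperplane m a"
    have H: "?H \<in> pg_hyperplanes m" using a by (auto simp: pg_hyperplanes_def)
    let ?coef = "\<lambda>H. if H = ?H then (1::'b) else 0"
    have w: "(\<lambda>x. \<Sum>H\<in>pg_hyperplanes m. ?coef H * incidence_vec H x) = incidence_vec ?H"
      using H finite_hyps[of m]
    proof (intro ext)
      fix x
      have "(\<Sum>H\<in>pg_hyperplanes m. ?coef H * incidence_vec H x) = (\<Sum>H\<in>pg_hyperplanes m. if H = ?H then incidence_vec ?H x else 0)"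
        by (rule sum.cong) auto
      also have "\<dots> = incidence_vec ?H x" using sum.delta[OF finite_hyps[of m], of ?H "\<lambda>_. incidence_vec ?H x"] H by simp
      finally show "(\<Sum>H\<in>pg_hyperplanes m. ?coef H * incidence_vec H x) = incidence_vec ?H x" .
    qed
    have "(\<lambda>x. \<Sum>H\<in>pg_hyperplanes m. ?coef H * incidence_vec H x) \<in> (pg_code m :: ((nat \<Rightarrow> 'a) set \<Rightarrow> 'b) set)"
      unfolding pg_code_def mem_Collect_eq by (intro exI[of _ ?coef]) simp
    hence "(\<Sum>x\<in>pg_points m. incidence_vec ?H x * c x) = 0"
      using c unfolding w pg_dual_code_def by blast
    also have "(\<Sum>x\<in>pg_points m. incidence_vec ?H x * c x) = (\<Sum>x\<in>?H. c x)"
      using hyp_sub[of m a] finite_pts[of m]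
      by (simp add: incidence_vec_def if_distrib[of "\<lambda>t. t * _"] cong: if_cong) (rule sum_restrict_sub)
    finally show "(\<Sum>x\<in>?H. c x) = 0" .
  qed
next
  assume c: "(\<forall>x. x \<notin> pg_points m \<longrightarrow> c x = 0) \<and>
   (\<forall>a. a \<in> vecs m \<and> a \<noteq> (\<lambda>_. 0) \<longrightarrow> (\<Sum>x\<in>pg_hyperplane m a. c x) = 0)"
  have hz: "(\<Sum>x\<in>H. c x) = 0" if "H \<in> pg_hyperplanes m" for H
    using that c by (auto simp: pg_hyperplanes_def)
  have "(\<Sum>x\<in>pg_points m. (\<Sum>H\<in>pg_hyperplanes m. coef H * incidence_vec H x) * c x) = 0" for coef :: "_ \<Rightarrow> 'b"
  proof -
    have "(\<Sum>x\<in>pg_points m. (\<Sum>H\<in>pg_hyperplanes m. coef H * incidence_vec H x) * c x)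
        = (\<Sum>H\<in>pg_hyperplanes m. coef H * (\<Sum>x\<in>pg_points m. incidence_vec H x * c x))"
      by (simp add: sum_distrib_right sum_distrib_left mult.assoc sum.swap[of _ "pg_points m"])
    also have "\<dots> = (\<Sum>H\<in>pg_hyperplanes m. coef H * (\<Sum>x\<in>H. c x))"
    proof (rule sum.cong[OF refl])
      fix H :: "(nat \<Rightarrow> 'a) set set" assume "H \<in> pg_hyperplanes m"
      then have "H \<subseteq> pg_points m" using hyp_sub by (auto simp: pg_hyperplanes_def)
      then have "(\<Sum>x\<in>pg_points m. incidence_vec H x * c x) = (\<Sum>x\<in>H. c x)"
        using finite_pts[of m]
        by (simp add: incidence_vec_def if_distrib[of "\<lambda>t. t * _"] cong: if_cong) (rule sum_restrict_sub)
      then show "coef H * (\<Sum>x\<in>pg_points m. incidence_vec H x * c x) = coef H * (\<Sum>x\<in>H. c x)"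
        by simp
    qed
    also have "\<dots> = 0" using hz by simp
    finally show ?thesis .
  qed
  then show "c \<in> pg_dual_code m" using c by (auto simp: pg_dual_code_def pg_code_def)
qed

lemma sum3: "(\<Sum>i\<le>2::nat. f i) = f 0 + f 1 + (f 2 :: 'a::comm_monoid_add)"
  by (simp add: numeral_2_eq_2 add.assoc)

definition mk3 :: "'a::zero \<Rightarrow> 'a \<Rightarrow> 'a \<Rightarrow> nat \<Rightarrow> 'a" where
  "mk3 x y z = (\<lambda>i. if i = 0 then x else if i = 1 then y else if i = 2 then z else 0)"

lemma mk3_vecs: "mk3 x y z \<in> vecs 2"
  by (simp add: mk3_def vecs_def)

lemma mk3_simps [simp]: "mk3 x y z 0 = x" "mk3 x y z 1 = y" "mk3 x y z 2 = z" "mk3 x y z (Suc 0) = y"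
  by (auto simp: mk3_def)

lemma mk3_nz: "(x::'a::zero) \<noteq> 0 \<or> y \<noteq> 0 \<or> z \<noteq> 0 \<Longrightarrow> mk3 x y z \<noteq> (\<lambda>_. 0)"
proof
  assume "(x::'a::zero) \<noteq> 0 \<or> y \<noteq> 0 \<or> z \<noteq> 0" "mk3 x y z = (\<lambda>_. 0)"
  note h = this(2)
  have "x = 0 \<and> y = 0 \<and> z = 0" using fun_cong[OF h, of 0] fun_cong[OF h, of 1] fun_cong[OF h, of 2] by simp
  with \<open>x \<noteq> 0 \<or> y \<noteq> 0 \<or> z \<noteq> 0\<close> show False by simp
qed

lemma sum_hyp_as_pts: "(\<Sum>x\<in>pg_hyperplane m a. c x) = (\<Sum>x\<in>pg_points m. if x \<in> pg_hyperplane m a then c x else (0::'b::comm_monoid_add))"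
  for a :: "nat \<Rightarrow> 'a::{finite,field}"
  by (rule sum_restrict_sub[symmetric]) (auto simp: finite_pts hyp_sub)

lemma pt_in_hyp:
  assumes "u \<in> vecs m" "u \<noteq> (\<lambda>_. 0)"
  shows "line_of u \<in> pg_hyperplane m a \<longleftrightarrow> (\<Sum>i\<le>m. a i * u i) = 0"
  using assms by (auto simp: line_in_hyp pts_iff)

lemma plane_total:
  fixes c :: "(nat \<Rightarrow> 'a::{finite,field}) set \<Rightarrow> 'b::field"
  assumes c: "c \<in> pg_dual_code 2" and q: "(of_nat (card (UNIV::'a set)) :: 'b) = 0"
  shows "(\<Sum>x\<in>pg_points 2. c x) = 0"
proof -
  define l where "l t = pg_hyperplane 2 (mk3 t (1::'a) 0)" for t
  define li where "li = pg_hyperplane 2 (mk3 (1::'a) 0 0)"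
  have cz: "\<And>a. a \<in> vecs 2 \<Longrightarrow> a \<noteq> (\<lambda>_. 0) \<Longrightarrow> (\<Sum>x\<in>pg_hyperplane 2 a. c x) = 0"
    using c by (simp add: dual_iff)
  have S: "(\<Sum>t\<in>UNIV. \<Sum>x\<in>l t. c x) + (\<Sum>x\<in>li. c x) = 0"
    unfolding l_def li_def by (simp add: cz mk3_vecs mk3_nz)
  have cnt: "of_nat (card {t. x \<in> l t}) + (if x \<in> li then 1 else 0) = (1::'b)"
    if x: "x \<in> pg_points 2" for x
  proof -
    obtain u where u: "u \<in> vecs 2" "u \<noteq> (\<lambda>_. 0)" "x = line_of u" using x by (auto simp: pts_iff)
    have ml: "x \<in> l t \<longleftrightarrow> t * u 0 + u 1 = 0" for t
      unfolding l_def u(3) by (simp add: pt_in_hyp[OF u(1,2)] sum3)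
    have mi: "x \<in> li \<longleftrightarrow> u 0 = 0"
      unfolding li_def u(3) by (simp add: pt_in_hyp[OF u(1,2)] sum3)
    show ?thesis
    proof (cases "u 0 = 0")
      case False
      have "{t. x \<in> l t} = {- u 1 / u 0}"
        using False by (auto simp: ml field_simps eq_neg_iff_add_eq_0 add.commute)
      thus ?thesis using False mi by simp
    next
      case True
      show ?thesis
      proof (cases "u 1 = 0")
        case True2: True
        have "{t. x \<in> l t} = UNIV" using True True2 by (auto simp: ml)
        thus ?thesis using True mi q by simp
      next
        case False
        have "{t. x \<in> l t} = {}" using True False by (auto simp: ml)
        thus ?thesis using True mi by simp
      qed
    qed
  qed
  have "(\<Sum>t\<in>UNIV. \<Sum>x\<in>l t. c x) + (\<Sum>x\<in>li. c x)
      = (\<Sum>t\<in>UNIV. \<Sum>x\<in>pg_points 2. if x \<in> l t then c x else 0) + (\<Sum>x\<in>pg_points 2. if x \<in> li then c x else 0)"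
    unfolding l_def li_def by (simp add: sum_hyp_as_pts)
  also have "\<dots> = (\<Sum>x\<in>pg_points 2. (\<Sum>t\<in>UNIV. if x \<in> l t then c x else 0) + (if x \<in> li then c x else 0))"
    by (simp add: sum.swap[of _ UNIV] sum.distrib)
  also have "\<dots> = (\<Sum>x\<in>pg_points 2. c x * (of_nat (card {t. x \<in> l t}) + (if x \<in> li then 1 else 0)))"
  proof (rule sum.cong[OF refl])
    fix x
    have "(\<Sum>t\<in>UNIV. if x \<in> l t then c x else 0) = (\<Sum>t\<in>{t. x \<in> l t}. c x)"
      by (simp add: sum.If_cases)
    also have "\<dots> = c x * of_nat (card {t. x \<in> l t})" by simp
    finally show "(\<Sum>t\<in>UNIV. if x \<in> l t then c x else 0) + (if x \<in> li then c x else 0) =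
         c x * (of_nat (card {t. x \<in> l t}) + (if x \<in> li then 1 else 0))"
      by (simp add: distrib_left)
  qed
  also have "\<dots> = (\<Sum>x\<in>pg_points 2. c x)"
    by (rule sum.cong[OF refl]) (simp add: cnt)
  finally show ?thesis using S by simp
qed

lemma vecs_mono: "m \<le> n \<Longrightarrow> vecs m \<subseteq> vecs n"
  by (auto simp: vecs_def)

lemma pts_mono: "m \<le> n \<Longrightarrow> pg_points m \<subseteq> pg_points n"
  using vecs_mono by (fastforce simp: pts_iff)

lemma sum_vecs_restrict:
  assumes "v \<in> vecs m" "m \<le> n"
  shows "(\<Sum>i\<le>n. a i * v i) = (\<Sum>i\<le>m. a i * (v i :: 'a::field))"
  by (rule sum.mono_neutral_right) (use assms in \<open>auto simp: vecs_def\<close>)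

lemma embed_dual:
  fixes c :: "(nat \<Rightarrow> 'a::{finite,field}) set \<Rightarrow> 'b::field"
  assumes c: "c \<in> pg_dual_code 2" and q: "(of_nat (card (UNIV::'a set)) :: 'b) = 0" and n: "n \<ge> 2"
  shows "c \<in> pg_dual_code n" "weight (pg_points n) c = weight (pg_points 2) c"
proof -
  have c0: "\<And>x. x \<notin> pg_points 2 \<Longrightarrow> c x = 0" using c by (simp add: dual_iff)
  have ch: "\<And>a. a \<in> vecs 2 \<Longrightarrow> a \<noteq> (\<lambda>_. 0) \<Longrightarrow> (\<Sum>x\<in>pg_hyperplane 2 a. c x) = 0"
    using c by (simp add: dual_iff)
  have P: "pg_points 2 \<subseteq> pg_points n" using pts_mono[OF n] .
  show "weight (pg_points n) c = weight (pg_points 2) c"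
    unfolding weight_def using P c0 by (metis (mono_tags, lifting) Collect_cong subsetD)
  show "c \<in> pg_dual_code n"
    unfolding dual_iff
  proof (intro conjI allI impI)
    show "x \<notin> pg_points n \<Longrightarrow> c x = 0" for x using P c0 by blast
    fix a :: "nat \<Rightarrow> 'a" assume a: "a \<in> vecs n \<and> a \<noteq> (\<lambda>_. 0)"
    define a2 where "a2 = (\<lambda>i. if i \<le> 2 then a i else 0)"
    have a2v: "a2 \<in> vecs 2" by (simp add: a2_def vecs_def)
    have key: "x \<in> pg_hyperplane n a \<longleftrightarrow> x \<in> pg_hyperplane 2 a2" if x: "x \<in> pg_points 2" for x
    proof -
      obtain u where u: "u \<in> vecs 2" "u \<noteq> (\<lambda>_. 0)" "x = line_of u" using x by (auto simp: pts_iff)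
      have un: "u \<in> vecs n" using u(1) vecs_mono[OF n] by blast
      have "(\<Sum>i\<le>n. a i * u i) = (\<Sum>i\<le>2. a i * u i)" by (rule sum_vecs_restrict[OF u(1) n])
      also have "\<dots> = (\<Sum>i\<le>2. a2 i * u i)" by (rule sum.cong) (auto simp: a2_def)
      finally show ?thesis unfolding u(3) pt_in_hyp[OF un u(2)] pt_in_hyp[OF u(1,2)] by simp
    qed
    have "(\<Sum>x\<in>pg_hyperplane n a. c x) = (\<Sum>x\<in>pg_hyperplane n a \<inter> pg_points 2. c x)"
      by (rule sum.mono_neutral_right) (auto simp: finite_subset[OF hyp_sub finite_pts] c0)
    also have "pg_hyperplane n a \<inter> pg_points 2 = (if a2 = (\<lambda>_. 0) then pg_points 2 else pg_hyperplane 2 a2)"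
    proof (cases "a2 = (\<lambda>_. 0)")
      case True
      have "pg_points 2 \<subseteq> pg_hyperplane 2 a2"
      proof
        fix x :: "(nat \<Rightarrow> 'a) set" assume x: "x \<in> pg_points 2"
        then obtain u where u: "u \<in> vecs 2" "u \<noteq> (\<lambda>_. 0)" "x = line_of u" by (auto simp: pts_iff)
        show "x \<in> pg_hyperplane 2 a2" unfolding u(3) pt_in_hyp[OF u(1,2)] using True by simp
      qed
      then show ?thesis using True key hyp_sub[of 2 a2] by auto
    next
      case False
      then show ?thesis using key hyp_sub[of 2 a2] by auto
    qed
    also have "(\<Sum>x\<in>(if a2 = (\<lambda>_. 0) then pg_points 2 else pg_hyperplane 2 a2). c x) = 0"
      using plane_total[OF c q] ch[OF a2v] by simp
    finally show "(\<Sum>x\<in>pg_hyperplane n a. c x) = 0" .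
  qed
qed

lemma mk3_line_eq:
  assumes "u \<in> vecs 2" "u 0 = (x::'a::field)" "u 1 = y" "u 2 = z"
  shows "u = mk3 x y z"
proof
  fix i show "u i = mk3 x y z i"
    using assms by (cases "i = 0"; cases "i = 1"; cases "i = 2") (auto simp: mk3_def vecs_def)
qed

lemma card_lin: "card {t::'a::{finite,field}. b + d * t = 0} = (if d \<noteq> 0 then 1 else if b = 0 then card (UNIV::'a set) else 0)"
proof (cases "d = 0")
  case False
  have "{t::'a. b + d * t = 0} = {- b / d}" using False by (auto simp: field_simps eq_neg_iff_add_eq_0 add.commute)
  then show ?thesis using False by simp
qed simp

lemma sum_ind: "finite H \<Longrightarrow> (\<Sum>x\<in>H. if x \<in> A then k else 0) = of_nat (card (H \<inter> A)) * (k::'b::semiring_1)"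
  by (simp add: sum.inter_restrict[symmetric])

lemma plane_codeword:
  assumes q: "(of_nat (card (UNIV::'a::{finite,field} set)) :: 'b::field) = 0"
  shows "\<exists>c :: (nat \<Rightarrow> 'a) set \<Rightarrow> 'b. c \<in> pg_dual_code 2 \<and> c \<noteq> (\<lambda>_. 0) \<and>
            weight (pg_points 2) c \<le> 2 * card (UNIV::'a set)"
proof -
  let ?q = "card (UNIV::'a set)"
  define fA where "fA t = line_of (mk3 0 (1::'a) t)" for t
  define fB where "fB t = line_of (mk3 (1::'a) 0 t)" for t
  define A where "A = range fA"
  define B where "B = range fB"
  define c :: "(nat \<Rightarrow> 'a) set \<Rightarrow> 'b" where "c x = (if x \<in> A then 1 else 0) + (if x \<in> B then -1 else 0)" for x
  have nzA: "mk3 0 (1::'a) t \<noteq> (\<lambda>_. 0)" for t by (rule mk3_nz) simp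
  have nzB: "mk3 (1::'a) 0 t \<noteq> (\<lambda>_. 0)" for t by (rule mk3_nz) simp
  have injA: "inj fA"
  proof (rule injI)
    fix s t assume "fA s = fA t"
    then obtain k where k: "mk3 0 (1::'a) s = (\<lambda>i. k * mk3 0 1 t i)" unfolding fA_def using line_of_eq by blast
    from fun_cong[OF k, of 1] fun_cong[OF k, of 2] show "s = t" by simp
  qed
  have injB: "inj fB"
  proof (rule injI)
    fix s t assume "fB s = fB t"
    then obtain k where k: "mk3 (1::'a) 0 s = (\<lambda>i. k * mk3 1 0 t i)" unfolding fB_def using line_of_eq by blast
    from fun_cong[OF k, of 0] fun_cong[OF k, of 2] show "s = t" by simp
  qed
  have Apts: "A \<subseteq> pg_points 2"
  proof
    fix x assume "x \<in> A" then obtain t where "x = fA t" by (auto simp: A_def)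
    then show "x \<in> pg_points 2" unfolding pts_iff fA_def using mk3_vecs nzA by blast
  qed
  have Bpts: "B \<subseteq> pg_points 2"
  proof
    fix x assume "x \<in> B" then obtain t where "x = fB t" by (auto simp: B_def)
    then show "x \<in> pg_points 2" unfolding pts_iff fB_def using mk3_vecs nzB by blast
  qed
  have AB: "A \<inter> B = {}"
  proof (auto simp: A_def B_def)
    fix s t assume "fA s = fB t"
    then obtain k where k: "mk3 0 (1::'a) s = (\<lambda>i. k * mk3 1 0 t i)" unfolding fA_def fB_def using line_of_eq by blast
    from fun_cong[OF k, of 1] show False by simp
  qed
  have cardA: "card A = ?q" unfolding A_def using injA by (simp add: card_image)
  have cardB: "card B = ?q" unfolding B_def using injB by (simp add: card_image)
  have hA: "pg_hyperplane 2 a \<inter> A = fA ` {t. a 1 + a 2 * t = 0}" for a :: "nat \<Rightarrow> 'a"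
    unfolding A_def fA_def using pt_in_hyp[OF mk3_vecs nzA] by (auto simp: sum3)
  have hB: "pg_hyperplane 2 a \<inter> B = fB ` {t. a 0 + a 2 * t = 0}" for a :: "nat \<Rightarrow> 'a"
    unfolding B_def fB_def using pt_in_hyp[OF mk3_vecs nzB] by (auto simp: sum3)
  have dual: "c \<in> pg_dual_code 2"
    unfolding dual_iff
  proof (intro conjI allI impI)
    show "x \<notin> pg_points 2 \<Longrightarrow> c x = 0" for x using Apts Bpts by (auto simp: c_def)
    fix a :: "nat \<Rightarrow> 'a" assume a: "a \<in> vecs 2 \<and> a \<noteq> (\<lambda>_. 0)"
    have fin: "finite (pg_hyperplane 2 a)" using finite_subset[OF hyp_sub finite_pts] .
    have "(\<Sum>x\<in>pg_hyperplane 2 a. c x) = of_nat (card (pg_hyperplane 2 a \<inter> A)) - of_nat (card (pg_hyperplane 2 a \<inter> B))"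
      unfolding c_def sum.distrib sum_ind[OF fin] by simp
    also have "\<dots> = of_nat (card {t. a 1 + a 2 * t = 0}) - of_nat (card {t. a 0 + a 2 * t = 0})"
      unfolding hA hB using injA injB by (simp add: card_image inj_on_subset)
    also have "\<dots> = 0" unfolding card_lin using q by simp
    finally show "(\<Sum>x\<in>pg_hyperplane 2 a. c x) = 0" .
  qed
  have "c (fA 0) = 1" using AB by (auto simp: c_def A_def)
  hence nz: "c \<noteq> (\<lambda>_. 0)" by auto
  have "{x \<in> pg_points 2. c x \<noteq> 0} \<subseteq> A \<union> B" by (auto simp: c_def)
  hence "weight (pg_points 2) c \<le> card (A \<union> B)"
    unfolding weight_def by (rule card_mono[rotated]) (simp add: A_def B_def)
  also have "\<dots> \<le> card A + card B" by (rule card_Un_le)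
  finally have "weight (pg_points 2) c \<le> 2 * ?q" using cardA cardB by simp
  thus ?thesis using dual nz by blast
qed

lemma arith_q: "(q::nat) \<ge> 2 \<Longrightarrow> q * (q * (2*q - 1)) + q + 1 < q^4"
proof -
  assume "q \<ge> 2"
  then obtain r where r: "q = r + 2" by (metis add.commute le_add_diff_inverse)
  show ?thesis unfolding r by (simp add: algebra_simps power4_eq_xxxx)
qed

definition sk :: "nat \<Rightarrow> nat \<Rightarrow> nat" where "sk j i = (if i < j then i else Suc i)"

definition proj :: "nat \<Rightarrow> nat \<Rightarrow> (nat \<Rightarrow> 'a::field) \<Rightarrow> (nat \<Rightarrow> 'a) \<Rightarrow> nat \<Rightarrow> 'a" where
  "proj m j p v = (\<lambda>i. if i < m then v (sk j i) - v j / p j * p (sk j i) else 0)"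

lemma sk_inj: "inj (sk j)" by (auto simp: inj_def sk_def split: if_splits)

lemma sk_img: "j \<le> m \<Longrightarrow> sk j ` {..<m} = {..m} - {j}"
proof
  assume j: "j \<le> m"
  show "sk j ` {..<m} \<subseteq> {..m} - {j}" using j by (auto simp: sk_def)
  show "{..m} - {j} \<subseteq> sk j ` {..<m}"
  proof
    fix x assume x: "x \<in> {..m} - {j}"
    show "x \<in> sk j ` {..<m}"
    proof (cases "x < j")
      case True
      then show ?thesis using j by (intro rev_image_eqI[of x]) (auto simp: sk_def)
    next
      case False
      then show ?thesis using x by (intro rev_image_eqI[of "x - 1"]) (auto simp: sk_def)
    qed
  qed
qed

lemma proj_vecs: "proj m j p v \<in> vecs (m - 1)"
  unfolding proj_def vecs_def by auto

lemma proj_smult: "proj m j p (\<lambda>i. k * v i) = (\<lambda>i. k * proj m j p v i)"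
  by (auto simp: proj_def fun_eq_iff algebra_simps)

lemma proj_diff: "proj m j p (\<lambda>i. v i - k * w i) = (\<lambda>i. proj m j p v i - k * proj m j p w i)"
  by (auto simp: proj_def fun_eq_iff algebra_simps diff_divide_distrib)

lemma proj_zero:
  assumes "v \<in> vecs m" "p \<in> vecs m" "j \<le> m" "p j \<noteq> 0" "proj m j p v = (\<lambda>_. 0)"
  shows "v = (\<lambda>i. (v j / p j) * p i)"
proof
  fix i
  show "v i = v j / p j * p i"
  proof (cases "i = j")
    case True thus ?thesis using assms(4) by simp
  next
    case False
    show ?thesis
    proof (cases "i \<le> m")
      case True
      define k where "k = (if i < j then i else i - 1)"
      have k: "k < m" "sk j k = i" using True False assms(3) by (auto simp: k_def sk_def)
      from fun_cong[OF assms(5), of k] k show ?thesis by (simp add: proj_def)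
    next
      case False thus ?thesis using assms(1,2) by (simp add: vecs_def)
    qed
  qed
qed

lemma proj_img: "proj m j p ` line_of v = line_of (proj m j p v)"
proof
  show "proj m j p ` line_of v \<subseteq> line_of (proj m j p v)" by (auto simp: line_of_def proj_smult)
  show "line_of (proj m j p v) \<subseteq> proj m j p ` line_of v"
  proof
    fix w assume "w \<in> line_of (proj m j p v)"
    then obtain k where "w = (\<lambda>i. k * proj m j p v i)" by (auto simp: line_of_def)
    hence "w = proj m j p (\<lambda>i. k * v i)" by (simp add: proj_smult)
    moreover have "(\<lambda>i. k * v i) \<in> line_of v" by (auto simp: line_of_def)
    ultimately show "w \<in> proj m j p ` line_of v" by blast
  qed
qed

lemma proj_functional:
  fixes a :: "nat \<Rightarrow> 'a::field"
  assumes m: "m \<ge> 1" and j: "j \<le> m" and pj: "p j \<noteq> 0" and a: "a \<in> vecs (m - 1)" "a \<noteq> (\<lambda>_. 0)"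
  shows "\<exists>a'. a' \<in> vecs m \<and> a' \<noteq> (\<lambda>_. 0) \<and>
           (\<forall>v. (\<Sum>i\<le>m-1. a i * proj m j p v i) = (\<Sum>k\<le>m. a' k * v k))"
proof -
  define S where "S = (\<Sum>i<m. a i * p (sk j i))"
  define a' where "a' k = (if k = j then - S / p j else if k \<le> m then a (if k < j then k else k - 1) else 0)" for k
  have a'sk: "a' (sk j i) = a i" if "i < m" for i using that j by (auto simp: a'_def sk_def)
  have "a' \<in> vecs m" using j by (auto simp: a'_def vecs_def)
  moreover have "a' \<noteq> (\<lambda>_. 0)"
  proof
    assume h: "a' = (\<lambda>_. 0)"
    from a(2) obtain i where i: "a i \<noteq> 0" by auto
    with a(1) have "i < m" using m by (cases "i < m") (auto simp: vecs_def)
    with h a'sk[OF this] i show False by simp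
  qed
  moreover have "(\<Sum>i\<le>m-1. a i * proj m j p v i) = (\<Sum>k\<le>m. a' k * v k)" for v
  proof -
    have at: "{..m-1} = {..<m}" using m by auto
    have eq1: "(\<Sum>i\<le>m-1. a i * proj m j p v i) = (\<Sum>i<m. a i * v (sk j i)) - v j / p j * S"
    proof -
      have "(\<Sum>i\<le>m-1. a i * proj m j p v i) = (\<Sum>i<m. a i * (v (sk j i) - v j / p j * p (sk j i)))"
        unfolding at by (rule sum.cong) (auto simp: proj_def)
      also have "\<dots> = (\<Sum>i<m. a i * v (sk j i)) - v j / p j * S"
        by (simp add: S_def algebra_simps sum_subtractf sum_distrib_left)
      finally show ?thesis .
    qed
    have eq2: "(\<Sum>i<m. a i * v (sk j i)) = (\<Sum>k\<in>{..m} - {j}. a' k * v k)"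
    proof -
      have "(\<Sum>i<m. a i * v (sk j i)) = (\<Sum>i<m. a' (sk j i) * v (sk j i))"
        by (rule sum.cong) (auto simp: a'sk)
      also have "\<dots> = (\<Sum>k\<in>sk j ` {..<m}. a' k * v k)"
        by (rule sum.reindex[symmetric, unfolded comp_def]) (rule inj_on_subset[OF sk_inj], simp)
      also have "\<dots> = (\<Sum>k\<in>{..m} - {j}. a' k * v k)" using sk_img[OF j] by simp
      finally show ?thesis .
    qed
    have eq3: "(\<Sum>k\<le>m. a' k * v k) = a' j * v j + (\<Sum>k\<in>{..m} - {j}. a' k * v k)"
      using j by (simp add: sum.remove)
    have eq4: "a' j * v j = - (v j / p j * S)" by (simp add: a'_def)
    show ?thesis unfolding eq1 eq2 eq3 eq4 by simp
  qed
  ultimately show ?thesis by blast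
qed

lemma card_field_ge2: "card (UNIV :: 'a::{finite,field} set) \<ge> 2"
proof -
  have "card {0::'a, 1} = 2" by simp
  moreover have "card {0::'a, 1} \<le> card (UNIV::'a set)" by (rule card_mono) auto
  ultimately show ?thesis by simp
qed

lemma card_vecs_ge:
  assumes "m \<ge> 3"
  shows "card (vecs m :: (nat \<Rightarrow> 'a::{finite,field}) set) \<ge> card (UNIV::'a set) ^ 4"
proof -
  define h :: "'a \<times> 'a \<times> 'a \<times> 'a \<Rightarrow> nat \<Rightarrow> 'a" where
    "h = (\<lambda>(a,b,c,d) i. if i = 0 then a else if i = 1 then b else if i = 2 then c else if i = 3 then d else 0)"
  have inj: "inj h"
  proof (rule injI)
    fix x y assume e: "h x = h y"
    obtain a b c d where x: "x = (a,b,c,d)" by (cases x) auto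
    obtain a' b' c' d' where y: "y = (a',b',c',d')" by (cases y) auto
    from fun_cong[OF e, of 0] fun_cong[OF e, of 1] fun_cong[OF e, of 2] fun_cong[OF e, of 3]
    show "x = y" unfolding x y h_def by simp
  qed
  have sub: "range h \<subseteq> vecs m" using assms by (auto simp: h_def vecs_def)
  have e4: "card (UNIV::('a \<times> 'a \<times> 'a \<times> 'a) set) = card (UNIV::'a set) ^ 4"
    by (simp add: UNIV_Times_UNIV[symmetric] card_cartesian_product power4_eq_xxxx del: UNIV_Times_UNIV)
  have "card (UNIV::('a \<times> 'a \<times> 'a \<times> 'a) set) = card (range h)" using inj by (simp add: card_image)
  also have "\<dots> \<le> card (vecs m :: (nat \<Rightarrow> 'a) set)" by (rule card_mono[OF finite_vecs sub])
  finally show ?thesis using e4 by simp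
qed

lemma good_p:
  fixes S :: "(nat \<Rightarrow> 'a::{finite,field}) set set"
  assumes m: "m \<ge> 3" and S: "S \<subseteq> pg_points m" and x0: "x0 \<in> S"
    and w: "card S \<le> 2 * card (UNIV::'a set)"
  shows "\<exists>u p. u \<in> vecs m \<and> u \<noteq> (\<lambda>_. 0) \<and> x0 = line_of u \<and> p \<in> vecs m \<and> p \<noteq> (\<lambda>_. 0) \<and>
     (\<forall>a. p \<noteq> (\<lambda>i. a * u i)) \<and> (\<forall>y\<in>S-{x0}. \<forall>w\<in>y. \<forall>a b. p \<noteq> (\<lambda>i. a * u i + b * w i))"
proof -
  let ?q = "card (UNIV::'a set)"
  have q2: "?q \<ge> 2" by (rule card_field_ge2)
  have finS: "finite S" using finite_subset[OF S finite_pts] .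
  define rep :: "(nat \<Rightarrow> 'a) set \<Rightarrow> nat \<Rightarrow> 'a" where "rep y = (SOME v. v \<in> vecs m \<and> v \<noteq> (\<lambda>_. 0) \<and> y = line_of v)" for y
  have rep: "rep y \<in> vecs m \<and> rep y \<noteq> (\<lambda>_. 0) \<and> y = line_of (rep y)" if "y \<in> S" for y
  proof -
    have "\<exists>v. v \<in> vecs m \<and> v \<noteq> (\<lambda>_. 0) \<and> y = line_of v" using that S by (auto simp: pts_iff)
    thus ?thesis unfolding rep_def by (rule someI_ex)
  qed
  define u where "u = rep x0"
  have u: "u \<in> vecs m" "u \<noteq> (\<lambda>_. 0)" "x0 = line_of u" using rep[OF x0] by (auto simp: u_def)
  define f where "f = (\<lambda>(a::'a,b::'a,y). (\<lambda>i. a * u i + b * rep y i))"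
  define g where "g = (\<lambda>a::'a. (\<lambda>i. a * u i))"
  define Bad where "Bad = f ` (UNIV \<times> UNIV \<times> (S - {x0})) \<union> range g"
  have finBad: "finite Bad" unfolding Bad_def using finS by simp
  have "card Bad \<le> card (f ` (UNIV \<times> UNIV \<times> (S - {x0}))) + card (range g)"
    unfolding Bad_def by (rule card_Un_le)
  also have "\<dots> \<le> card (UNIV \<times> UNIV \<times> (S - {x0}) :: ('a \<times> 'a \<times> _) set) + ?q"
    by (intro add_mono card_image_le) (use finS in auto)
  also have "card (UNIV \<times> UNIV \<times> (S - {x0}) :: ('a \<times> 'a \<times> _) set) = ?q * (?q * (card S - 1))"
    using x0 finS by (simp add: card_cartesian_product)
  also have "?q * (?q * (card S - 1)) \<le> ?q * (?q * (2 * ?q - 1))"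
    using w by (intro mult_le_mono order.refl) auto
  finally have cB: "card Bad + 1 < ?q ^ 4" using arith_q[OF q2] by linarith
  have z: "(\<lambda>_. 0) \<in> (vecs m :: (nat \<Rightarrow> 'a) set)" by (simp add: vecs_def)
  have "card (vecs m - {(\<lambda>_. 0)} :: (nat \<Rightarrow> 'a) set) = card (vecs m :: (nat \<Rightarrow> 'a) set) - 1"
    using z finite_vecs by (simp add: card_Diff_singleton)
  hence cV: "card (vecs m - {(\<lambda>_. 0)} :: (nat \<Rightarrow> 'a) set) > card Bad"
    using card_vecs_ge[OF m, where 'a='a] cB by linarith
  have "\<not> (vecs m - {(\<lambda>_. 0)} \<subseteq> Bad)"
    using card_mono[OF finBad] cV by (auto dest: card_mono[OF finBad])
  then obtain p where p: "p \<in> vecs m" "p \<noteq> (\<lambda>_. 0)" "p \<notin> Bad" by blast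
  have p1: "\<forall>a. p \<noteq> (\<lambda>i. a * u i)" using p(3) unfolding Bad_def g_def by auto
  have p2: "\<forall>y\<in>S-{x0}. \<forall>w\<in>y. \<forall>a b. p \<noteq> (\<lambda>i. a * u i + b * w i)"
  proof (intro ballI allI notI)
    fix y w a b assume y: "y \<in> S - {x0}" and wy: "w \<in> y" and e: "p = (\<lambda>i. a * u i + b * w i)"
    have "y = line_of (rep y)" using rep[of y] y by blast
    with wy have "w \<in> line_of (rep y)" by simp
    then obtain k where k: "w = (\<lambda>i. k * rep y i)" by (auto simp: in_line_of)
    have "p = f (a, b * k, y)" unfolding e k f_def by (simp add: mult.assoc)
    hence "p \<in> Bad" using y unfolding Bad_def by auto
    with p(3) show False by simp
  qed
  show ?thesis using u p p1 p2 by blast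
qed

lemma project:
  fixes c :: "(nat \<Rightarrow> 'a::{finite,field}) set \<Rightarrow> 'b::field"
  assumes c: "c \<in> pg_dual_code m" and nz: "c \<noteq> (\<lambda>_. 0)" and m: "m \<ge> 3"
    and w: "weight (pg_points m) c \<le> 2 * card (UNIV::'a set)"
  shows "\<exists>c' :: (nat \<Rightarrow> 'a) set \<Rightarrow> 'b. c' \<in> pg_dual_code (m-1) \<and> c' \<noteq> (\<lambda>_. 0) \<and>
            weight (pg_points (m-1)) c' \<le> weight (pg_points m) c"
proof -
  have c0: "\<And>x. x \<notin> pg_points m \<Longrightarrow> c x = 0" using c by (simp add: dual_iff)
  have ch: "\<And>a. a \<in> vecs m \<Longrightarrow> a \<noteq> (\<lambda>_. 0) \<Longrightarrow> (\<Sum>x\<in>pg_hyperplane m a. c x) = 0"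
    using c by (simp add: dual_iff)
  define S where "S = {x \<in> pg_points m. c x \<noteq> 0}"
  have Ssub: "S \<subseteq> pg_points m" by (auto simp: S_def)
  have finS: "finite S" using finite_subset[OF Ssub finite_pts] .
  have wS: "weight (pg_points m) c = card S" by (simp add: weight_def S_def)
  obtain x0 where "c x0 \<noteq> 0" using nz by auto
  hence x0: "x0 \<in> S" using c0 by (auto simp: S_def)
  obtain u p where u: "u \<in> vecs m" "u \<noteq> (\<lambda>_. 0)" "x0 = line_of u"
    and p: "p \<in> vecs m" "p \<noteq> (\<lambda>_. 0)"
    and p1: "\<forall>a. p \<noteq> (\<lambda>i. a * u i)"
    and p2: "\<forall>y\<in>S-{x0}. \<forall>w\<in>y. \<forall>a b. p \<noteq> (\<lambda>i. a * u i + b * w i)"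
    using good_p[OF m Ssub x0] w wS by auto
  obtain j where j: "p j \<noteq> 0" using p(2) by auto
  have jm: "j \<le> m" using j p(1) by (cases "j \<le> m") (auto simp: vecs_def)
  define T where "T = proj m j p"
  define P where "P = line_of p"
  have PS: "P \<notin> S"
  proof
    assume PS: "P \<in> S"
    show False
    proof (cases "P = x0")
      case True
      have "p \<in> line_of u" using self_in_line_of[of p] True u(3) by (simp add: P_def)
      then obtain a where "p = (\<lambda>i. a * u i)" by (auto simp: in_line_of)
      with p1 show False by blast
    next
      case False
      have "p = (\<lambda>i. 0 * u i + 1 * p i)" by simp
      moreover have "p \<in> P" unfolding P_def by (rule self_in_line_of)
      ultimately show False using p2 PS False by blast
    qed
  qed
  have cP: "c P = 0" using PS c0 by (auto simp: S_def)
  have Tnz: "T v \<noteq> (\<lambda>_. 0)" if v: "v \<in> vecs m" "v \<noteq> (\<lambda>_. 0)" "line_of v \<noteq> P" for v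
  proof
    assume "T v = (\<lambda>_. 0)"
    hence e: "v = (\<lambda>i. (v j / p j) * p i)" using proj_zero[OF v(1) p(1) jm j] by (simp add: T_def)
    have "v j / p j \<noteq> 0" using v(2) e by auto
    hence "line_of v = P" unfolding P_def by (subst e) (rule line_of_smult)
    with v(3) show False by simp
  qed
  have img: "T ` x \<in> pg_points (m-1)" if x: "x \<in> pg_points m" "x \<noteq> P" for x
  proof -
    obtain v where v: "v \<in> vecs m" "v \<noteq> (\<lambda>_. 0)" "x = line_of v" using x(1) by (auto simp: pts_iff)
    have "T ` x = line_of (T v)" unfolding v(3) T_def by (rule proj_img)
    moreover have "T v \<in> vecs (m-1)" unfolding T_def by (rule proj_vecs)
    moreover have "T v \<noteq> (\<lambda>_. 0)" using Tnz v x(2) by blast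
    ultimately show ?thesis by (auto simp: pts_iff)
  qed
  define c' :: "(nat \<Rightarrow> 'a) set \<Rightarrow> 'b" where "c' Q = (\<Sum>x\<in>{x\<in>pg_points m. x \<noteq> P \<and> T ` x = Q}. c x)" for Q
  have fin_fib: "finite {x\<in>pg_points m. x \<noteq> P \<and> T ` x = Q}" for Q by (rule finite_subset[OF _ finite_pts[of m]]) auto
  have dual': "c' \<in> pg_dual_code (m-1)"
    unfolding dual_iff
  proof (intro conjI allI impI)
    fix Q :: "(nat \<Rightarrow> 'a) set" assume "Q \<notin> pg_points (m-1)"
    hence "{x\<in>pg_points m. x \<noteq> P \<and> T ` x = Q} = {}" using img by auto
    thus "c' Q = 0" unfolding c'_def by (metis (no_types, lifting) sum.empty)
  next
    fix a :: "nat \<Rightarrow> 'a" assume a: "a \<in> vecs (m-1) \<and> a \<noteq> (\<lambda>_. 0)"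
    obtain a' where a': "a' \<in> vecs m" "a' \<noteq> (\<lambda>_. 0)"
      and a'e: "\<And>v. (\<Sum>i\<le>m-1. a i * proj m j p v i) = (\<Sum>k\<le>m. a' k * v k)"
      using proj_functional[of m j p a] m jm j a by auto
    define X where "X = {x \<in> pg_points m - {P}. T ` x \<in> pg_hyperplane (m-1) a}"
    have XH: "X = pg_hyperplane m a' - {P}"
    proof (rule Set.set_eqI)
      fix x :: "(nat \<Rightarrow> 'a) set"
      show "x \<in> X \<longleftrightarrow> x \<in> pg_hyperplane m a' - {P}"
      proof (cases "x \<in> pg_points m \<and> x \<noteq> P")
        case True
        obtain v where v: "v \<in> vecs m" "v \<noteq> (\<lambda>_. 0)" "x = line_of v" using True by (auto simp: pts_iff)
        have Tx: "T ` x = line_of (T v)" unfolding v(3) T_def by (rule proj_img)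
        have Tv: "T v \<in> vecs (m-1)" "T v \<noteq> (\<lambda>_. 0)" using proj_vecs Tnz v True by (auto simp: T_def)
        have "T ` x \<in> pg_hyperplane (m-1) a \<longleftrightarrow> (\<Sum>i\<le>m-1. a i * T v i) = 0"
          unfolding Tx by (rule pt_in_hyp[OF Tv])
        also have "\<dots> \<longleftrightarrow> (\<Sum>k\<le>m. a' k * v k) = 0" unfolding T_def a'e ..
        also have "\<dots> \<longleftrightarrow> x \<in> pg_hyperplane m a'" unfolding v(3) by (rule pt_in_hyp[OF v(1,2), symmetric])
        finally show ?thesis using True by (auto simp: X_def)
      next
        case False
        then show ?thesis using hyp_sub[of m a'] by (auto simp: X_def)
      qed
    qed
    have finH: "finite (pg_hyperplane (m-1) a)" using finite_subset[OF hyp_sub finite_pts] .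
    have finX: "finite X" unfolding X_def by (rule finite_subset[OF _ finite_pts[of m]]) auto
    have "(\<Sum>Q\<in>pg_hyperplane (m-1) a. c' Q) = (\<Sum>Q\<in>pg_hyperplane (m-1) a. \<Sum>x\<in>{x. x \<in> X \<and> T ` x = Q}. c x)"
    proof (rule sum.cong[OF refl])
      fix Q :: "(nat \<Rightarrow> 'a) set" assume "Q \<in> pg_hyperplane (m-1) a"
      hence "{x\<in>pg_points m. x \<noteq> P \<and> T ` x = Q} = {x. x \<in> X \<and> T ` x = Q}" by (auto simp: X_def)
      thus "c' Q = (\<Sum>x\<in>{x. x \<in> X \<and> T ` x = Q}. c x)" by (simp add: c'_def)
    qed
    also have "\<dots> = (\<Sum>x\<in>X. c x)"
      by (rule sum.group[OF finX finH]) (auto simp: X_def)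
    also have "\<dots> = (\<Sum>x\<in>pg_hyperplane m a'. c x)"
      unfolding XH using cP by (simp add: sum_diff1[OF finite_subset[OF hyp_sub finite_pts]])
    also have "\<dots> = 0" by (rule ch[OF a'])
    finally show "(\<Sum>Q\<in>pg_hyperplane (m-1) a. c' Q) = 0" .
  qed
  define X0 where "X0 = {x\<in>pg_points m. x \<noteq> P \<and> T ` x = T ` x0}"
  have x0X0: "x0 \<in> X0" using x0 PS Ssub by (auto simp: X0_def)
  have other: "c x = 0" if x: "x \<in> X0 - {x0}" for x
  proof (rule ccontr)
    assume cx: "c x \<noteq> 0"
    hence xS: "x \<in> S - {x0}" using x by (auto simp: S_def X0_def)
    obtain wv where wv: "wv \<in> vecs m" "wv \<noteq> (\<lambda>_. 0)" "x = line_of wv" using x by (auto simp: pts_iff X0_def)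
    have "T wv \<in> T ` x" using self_in_line_of[of wv] wv(3) by auto
    also have "T ` x = T ` x0" using x by (simp add: X0_def)
    also have "\<dots> = line_of (T u)" unfolding u(3) T_def by (rule proj_img)
    finally obtain k where k: "T wv = (\<lambda>i. k * T u i)" by (auto simp: in_line_of)
    have "T (\<lambda>i. wv i - k * u i) = (\<lambda>_. 0)" unfolding T_def proj_diff using k by (simp add: T_def)
    moreover have "(\<lambda>i. wv i - k * u i) \<in> vecs m" using wv(1) u(1) by (simp add: vecs_def)
    ultimately have e0: "(\<lambda>i. wv i - k * u i) = (\<lambda>i. ((wv j - k * u j) / p j) * p i)"
      using proj_zero[OF _ p(1) jm j] unfolding T_def by blast
    define r where "r = (wv j - k * u j) / p j"
    have e: "wv i - k * u i = r * p i" for i using fun_cong[OF e0, of i] by (simp add: r_def)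
    show False
    proof (cases "r = 0")
      case True
      hence wk: "wv = (\<lambda>i. k * u i)" using e by (auto simp: fun_eq_iff)
      have "k \<noteq> 0" using wv(2) wk by auto
      hence "x = x0" unfolding wv(3) u(3) wk by (rule line_of_smult)
      with xS show False by simp
    next
      case False
      have "p = (\<lambda>i. (- k / r) * u i + (1 / r) * wv i)"
      proof
        fix i show "p i = (- k / r) * u i + (1 / r) * wv i"
          using e[of i] False by (simp add: field_simps)
      qed
      moreover have "wv \<in> x" unfolding wv(3) by (rule self_in_line_of)
      ultimately show False using p2 xS by blast
    qed
  qed
  have "c' (T ` x0) = c x0"
  proof -
    have "c' (T ` x0) = (\<Sum>x\<in>X0. c x)" by (simp add: c'_def X0_def)
    also have "\<dots> = c x0 + (\<Sum>x\<in>X0 - {x0}. c x)"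
      using x0X0 fin_fib by (simp add: X0_def sum.remove)
    also have "(\<Sum>x\<in>X0 - {x0}. c x) = 0" using other by simp
    finally show ?thesis by simp
  qed
  hence nz': "c' \<noteq> (\<lambda>_. 0)" using x0 by (auto simp: S_def)
  have "{Q \<in> pg_points (m-1). c' Q \<noteq> 0} \<subseteq> (\<lambda>x. T ` x) ` S"
  proof
    fix Q :: "(nat \<Rightarrow> 'a) set" assume "Q \<in> {Q \<in> pg_points (m-1). c' Q \<noteq> 0}"
    hence "(\<Sum>x\<in>{x\<in>pg_points m. x \<noteq> P \<and> T ` x = Q}. c x) \<noteq> 0" by (simp add: c'_def)
    then obtain x where "x \<in> {x\<in>pg_points m. x \<noteq> P \<and> T ` x = Q}" "c x \<noteq> 0"
      using sum.not_neutral_contains_not_neutral by blast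
    thus "Q \<in> (\<lambda>x. T ` x) ` S" by (auto simp: S_def)
  qed
  hence "weight (pg_points (m-1)) c' \<le> card ((\<lambda>x. T ` x) ` S)"
    unfolding weight_def by (rule card_mono[rotated]) (use finS in simp)
  also have "\<dots> \<le> card S" using finS by (rule card_image_le)
  finally show ?thesis using dual' nz' wS by auto
qed

lemma descent:
  fixes c :: "(nat \<Rightarrow> 'a::{finite,field}) set \<Rightarrow> 'b::field"
  assumes "m \<ge> 2" "c \<in> pg_dual_code m" "c \<noteq> (\<lambda>_. 0)" "weight (pg_points m) c \<le> 2 * card (UNIV::'a set)"
  shows "\<exists>c'' :: (nat \<Rightarrow> 'a) set \<Rightarrow> 'b. c'' \<in> pg_dual_code 2 \<and> c'' \<noteq> (\<lambda>_. 0) \<and>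
            weight (pg_points 2) c'' \<le> weight (pg_points m) c"
  using assms
proof (induction m arbitrary: c rule: less_induct)
  case (less m)
  show ?case
  proof (cases "m = 2")
    case True
    then show ?thesis using less.prems by blast
  next
    case False
    hence m3: "m \<ge> 3" using less.prems(1) by simp
    obtain c' :: "(nat \<Rightarrow> 'a) set \<Rightarrow> 'b" where c': "c' \<in> pg_dual_code (m-1)" "c' \<noteq> (\<lambda>_. 0)"
      "weight (pg_points (m-1)) c' \<le> weight (pg_points m) c"
      using project[OF less.prems(2,3) m3 less.prems(4)] by blast
    have "m - 1 < m" "m - 1 \<ge> 2" using m3 by auto
    from less.IH[OF this c'(1,2)] c'(3) less.prems(4)
    obtain c'' :: "(nat \<Rightarrow> 'a) set \<Rightarrow> 'b" where "c'' \<in> pg_dual_code 2 \<and> c'' \<noteq> (\<lambda>_. 0) \<and>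
            weight (pg_points 2) c'' \<le> weight (pg_points (m-1)) c'" by fastforce
    thus ?thesis using c'(3) by (meson le_trans)
  qed
qed

lemma weight_le: "weight (pg_points m) (c :: (nat \<Rightarrow> 'a::{finite,field}) set \<Rightarrow> 'b::field) \<le> card (pg_points m :: (nat \<Rightarrow> 'a) set set)"
  unfolding weight_def by (rule card_mono[OF finite_pts]) auto

theorem mainTheorem14:
  fixes n :: nat
  assumes "n \<ge> 3"
    and "card (UNIV :: 'b::{finite,field} set) = semiring_char TYPE('a::{finite,field})"
  shows "dual_min_dist TYPE('a) TYPE('b) n = dual_min_dist TYPE('a) TYPE('b) 2"
proof -
  have q0: "(of_nat (card (UNIV::'a set)) :: 'b) = 0" by (rule char_zero_b[OF assms(2)])
  define W where "W m = {weight (pg_points m) c | c. c \<in> (pg_dual_code m :: ((nat \<Rightarrow> 'a) set \<Rightarrow> 'b) set) \<and> c \<noteq> (\<lambda>_. 0)}" for m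
  have D: "dual_min_dist TYPE('a) TYPE('b) m = Min (W m)" for m by (simp add: dual_min_dist_def W_def)
  have finW: "finite (W m)" for m
  proof (rule finite_subset)
    show "W m \<subseteq> {..card (pg_points m :: (nat \<Rightarrow> 'a) set set)}" unfolding W_def using weight_le by fastforce
  qed simp
  have n2: "n \<ge> 2" using assms(1) by simp
  obtain c0 :: "(nat \<Rightarrow> 'a) set \<Rightarrow> 'b" where c0: "c0 \<in> pg_dual_code 2" "c0 \<noteq> (\<lambda>_. 0)"
    "weight (pg_points 2) c0 \<le> 2 * card (UNIV::'a set)"
    using plane_codeword[OF q0] by blast
  have sub: "W 2 \<subseteq> W n"
  proof
    fix k assume "k \<in> W 2"
    then obtain c :: "(nat \<Rightarrow> 'a) set \<Rightarrow> 'b" where c: "c \<in> pg_dual_code 2" "c \<noteq> (\<lambda>_. 0)" "k = weight (pg_points 2) c"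
      unfolding W_def by blast
    show "k \<in> W n" unfolding W_def using embed_dual[OF c(1) q0 n2] c by (metis (mono_tags, lifting) mem_Collect_eq)
  qed
  have ne2: "W 2 \<noteq> {}" unfolding W_def using c0 by blast
  have le1: "Min (W n) \<le> Min (W 2)" by (rule Min_antimono[OF sub ne2 finW])
  have "Min (W n) \<in> W n" using ne2 sub finW by (intro Min_in) auto
  then obtain c :: "(nat \<Rightarrow> 'a) set \<Rightarrow> 'b" where c: "c \<in> pg_dual_code n" "c \<noteq> (\<lambda>_. 0)" "Min (W n) = weight (pg_points n) c"
    unfolding W_def by blast
  have "Min (W 2) \<le> weight (pg_points 2) c0" using c0 finW unfolding W_def by (intro Min_le) auto
  hence "weight (pg_points n) c \<le> 2 * card (UNIV::'a set)" using le1 c(3) c0(3) by linarith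
  then obtain c'' :: "(nat \<Rightarrow> 'a) set \<Rightarrow> 'b" where c'': "c'' \<in> pg_dual_code 2" "c'' \<noteq> (\<lambda>_. 0)"
    "weight (pg_points 2) c'' \<le> weight (pg_points n) c"
    using descent[OF n2 c(1,2)] by blast
  have "Min (W 2) \<le> weight (pg_points 2) c''" using c'' finW unfolding W_def by (intro Min_le) auto
  hence "Min (W 2) \<le> Min (W n)" using c(3) c''(3) by linarith
  thus ?thesis using le1 D by simp
qed

end
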